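(* Let $s,d$ be integers with $1\le s\le d$ and let $\ell\in\mathcal L$. For any $a>0,\tau>0$, $$\inf_{\hat T}\sup_{P_\xi\in\mathcal G_{a,\tau}}\sup_{\sigma>0}\sup_{\theta\in\Theta_s}\mathbf E_{\theta,P_\xi,\sigma}\,\ell\Big(c\,\big(\sqrt s\log^{1/a}(ed/s)\big)^{-1}\Big|\frac{\hat T-\|\theta\|_2}{\sigma}\Big|\Big)\ge c',$$ and for any $a\ge2,\tau>0$, $$\inf_{\hat T}\sup_{P_\xi\in\mathcal P_{a,\tau}}\sup_{\sigma>0}\sup_{\theta\in\Theta_s}\mathbf E_{\theta,P_\xi,\sigma}\,\ell\Big(\bar c\,\big(\sqrt s(d/s)^{1/a}\big)^{-1}\Big|\frac{\hat T-\|\theta\|_2}{\sigma}\Big|\Big)\ge \bar c',$$ where $c,\bar c,c',\bar c'>0$ are constants depending only on $\ell$, $\tau$ and $a$.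
   Context: Model: $Y_i=\theta_i+\sigma\xi_i$, $i=1,\dots,d$, with $\theta\in\mathbb R^d$, $\sigma>0$, $\xi_i$ i.i.d. with distribution $P_\xi$, $\mathbf E\xi_1=0$, $\mathbf E\xi_1^2=1$; $\mathbf E_{\theta,P_\xi,\sigma}$ is expectation under this model; $\Theta_s=\{\theta:\|\theta\|_0\le s\}$ ($\|\theta\|_0$ = number of nonzero coordinates). For $a,\tau>0$, $\mathcal G_{a,\tau}$: distributions with $\mathbf E\xi_1=0,\mathbf E\xi_1^2=1$, $\mathbf P(|\xi_1|>t)\le2e^{-(t/\tau)^a}$ for all $t\ge2$; for $a\ge2,\tau>0$, $\mathcal P_{a,\tau}$: such distributions with $\mathbf P(|\xi_1|>t)\le(\tau/t)^a$ for all $t\ge2$. $\mathcal L$ is the set of nondecreasing $\ell:[0,\infty)\to[0,\infty)$ with $\ell(0)=0$, $\ell\not\equiv0$. $\inf_{\hat T}$ is the infimum over all estimators (measurable functions of $Y$). *)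

theory Defs
  imports "HOL-Probability.Probability"
begin

definition loss_class :: "(real \<Rightarrow> real) set" where
  "loss_class = {l. (\<forall>x y. 0 \<le> x \<longrightarrow> x \<le> y \<longrightarrow> l x \<le> l y)
                    \<and> (\<forall>x\<ge>0. l x \<ge> 0) \<and> l 0 = 0 \<and> (\<exists>x\<ge>0. l x \<noteq> 0)}"

definition std_noise :: "real measure set" where
  "std_noise = {P. prob_space P \<and> sets P = sets borel
                  \<and> integrable P (\<lambda>x. x) \<and> integrable P (\<lambda>x. x ^ 2)
                  \<and> (\<integral>x. x \<partial>P) = 0 \<and> (\<integral>x. x ^ 2 \<partial>P) = 1}"

definition subexp_class :: "real \<Rightarrow> real \<Rightarrow> real measure set" where
  "subexp_class a \<tau> = {P \<in> std_noise.
      \<forall>t\<ge>2. measure P {x. \<bar>x\<bar> > t} \<le> 2 * exp (- ((t / \<tau>) powr a))}"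

definition poly_class :: "real \<Rightarrow> real \<Rightarrow> real measure set" where
  "poly_class a \<tau> = {P \<in> std_noise.
      \<forall>t\<ge>2. measure P {x. \<bar>x\<bar> > t} \<le> (\<tau> / t) powr a}"

text \<open>Vectors of R^d are functions nat => real vanishing outside {..<d}.\<close>
definition sparse_set :: "nat \<Rightarrow> nat \<Rightarrow> (nat \<Rightarrow> real) set" where
  "sparse_set d s = {\<theta>. (\<forall>i\<ge>d. \<theta> i = 0) \<and> card {i. i < d \<and> \<theta> i \<noteq> 0} \<le> s}"

definition l2norm :: "nat \<Rightarrow> (nat \<Rightarrow> real) \<Rightarrow> real" where
  "l2norm d \<theta> = sqrt (\<Sum>i<d. (\<theta> i)\<^sup>2)"

definition obs_law :: "nat \<Rightarrow> (nat \<Rightarrow> real) \<Rightarrow> real \<Rightarrow> real measure \<Rightarrow> (nat \<Rightarrow> real) measure" where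
  "obs_law d \<theta> \<sigma> P = PiM {..<d} (\<lambda>i. distr P borel (\<lambda>x. \<theta> i + \<sigma> * x))"

definition estimators :: "nat \<Rightarrow> ((nat \<Rightarrow> real) \<Rightarrow> real) set" where
  "estimators d = borel_measurable (PiM {..<d} (\<lambda>_. borel))"

definition risk :: "(real \<Rightarrow> real) \<Rightarrow> real \<Rightarrow> nat \<Rightarrow> ((nat \<Rightarrow> real) \<Rightarrow> real)
                    \<Rightarrow> (nat \<Rightarrow> real) \<Rightarrow> real \<Rightarrow> real measure \<Rightarrow> ennreal" where
  "risk l r d T \<theta> \<sigma> P =
     (\<integral>\<^sup>+ y. ennreal (l (r * \<bar>(T y - l2norm d \<theta>) / \<sigma>\<bar>)) \<partial>obs_law d \<theta> \<sigma> P)"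

definition worst_risk :: "(real \<Rightarrow> real) \<Rightarrow> real \<Rightarrow> nat \<Rightarrow> nat \<Rightarrow> real measure set
                          \<Rightarrow> ((nat \<Rightarrow> real) \<Rightarrow> real) \<Rightarrow> ennreal" where
  "worst_risk l r d s \<G> T =
     Sup {risk l r d T \<theta> \<sigma> P | P \<sigma> \<theta>. P \<in> \<G> \<and> \<sigma> > 0 \<and> \<theta> \<in> sparse_set d s}"

end

theory Submission
  imports Defs
begin

lemma binom_mean:
  fixes p :: real
  shows "(\<Sum>k\<le>n. real (n choose k) * p^k * (1-p)^(n-k) * real k) = real n * p"
proof (cases n)
  case 0 then show ?thesis by simp
next
  case (Suc m)
  have "(\<Sum>k\<le>Suc m. real (Suc m choose k) * p^k * (1-p)^(Suc m-k) * real k)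
      = (\<Sum>k\<le>m. real (Suc m choose Suc k) * p^Suc k * (1-p)^(Suc m- Suc k) * real (Suc k))"
    by (subst sum.atMost_Suc_shift) simp
  also have "\<dots> = (\<Sum>k\<le>m. real (Suc m) * p * (real (m choose k) * p^k * (1-p)^(m-k)))"
  proof (rule sum.cong[OF refl])
    fix k assume "k \<in> {..m}"
    have "real (Suc m choose Suc k) * real (Suc k) = real (Suc m) * real (m choose k)"
      using Suc_times_binomial_eq[of m k] by (metis of_nat_mult)
    then show "real (Suc m choose Suc k) * p^Suc k * (1-p)^(Suc m- Suc k) * real (Suc k)
       = real (Suc m) * p * (real (m choose k) * p^k * (1-p)^(m-k))"
    proof -
      have "real (Suc m choose Suc k) * p^Suc k * (1-p)^(Suc m- Suc k) * real (Suc k)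
        = (real (Suc m choose Suc k) * real (Suc k)) * p * (p^k * (1-p)^(m-k))" by (simp add: algebra_simps)
      also have "\<dots> = real (Suc m) * p * (real (m choose k) * p^k * (1-p)^(m-k))"
        unfolding \<open>real (Suc m choose Suc k) * real (Suc k) = real (Suc m) * real (m choose k)\<close> by (simp add: algebra_simps)
      finally show ?thesis .
    qed
  qed
  also have "\<dots> = real (Suc m) * p * (\<Sum>k\<le>m. real (m choose k) * p^k * (1-p)^(m-k))"
    by (simp add: sum_distrib_left)
  also have "(\<Sum>k\<le>m. real (m choose k) * p^k * (1-p)^(m-k)) = 1"
    using binomial_ring[of p "1-p" m] by (simp add: atLeast0AtMost)
  finally show ?thesis using Suc by simp
qed

lemma binom_sum1:
  fixes p :: real
  shows "(\<Sum>k\<le>n. real (n choose k) * p^k * (1-p)^(n-k)) = 1"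
  using binomial_ring[of p "1-p" n] by (simp add: atLeast0AtMost)

lemma binom_fact2:
  fixes p :: real
  shows "(\<Sum>k\<le>n. real (n choose k) * p^k * (1-p)^(n-k) * (real k * (real k - 1))) = real n * (real n - 1) * p^2"
proof (cases n)
  case 0 then show ?thesis by simp
next
  case (Suc n1)
  show ?thesis
  proof (cases n1)
    case 0 then show ?thesis using Suc by simp
  next
    case (Suc m)
    have nn: "n = Suc (Suc m)" using \<open>n = Suc n1\<close> Suc by simp
    have "(\<Sum>k\<le>Suc (Suc m). real (Suc (Suc m) choose k) * p^k * (1-p)^(Suc (Suc m)-k) * (real k * (real k - 1)))
      = (\<Sum>k\<le>m. real (Suc (Suc m) choose Suc (Suc k)) * p^Suc (Suc k) * (1-p)^(m-k) * (real (Suc (Suc k)) * (real (Suc (Suc k)) - 1)))"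
      by (subst sum.atMost_Suc_shift, subst sum.atMost_Suc_shift) (simp del: binomial_Suc_Suc)
    also have "\<dots> = (\<Sum>k\<le>m. real (Suc (Suc m)) * real (Suc m) * p^2 * (real (m choose k) * p^k * (1-p)^(m-k)))"
    proof (rule sum.cong[OF refl])
      fix k assume "k \<in> {..m}"
      have e1: "real (Suc (Suc m) choose Suc (Suc k)) * real (Suc (Suc k)) = real (Suc (Suc m)) * real (Suc m choose Suc k)"
        using Suc_times_binomial_eq[of "Suc m" "Suc k"] by (metis of_nat_mult)
      have e2: "real (Suc m choose Suc k) * real (Suc k) = real (Suc m) * real (m choose k)"
        using Suc_times_binomial_eq[of m k] by (metis of_nat_mult)
      have "real (Suc (Suc m) choose Suc (Suc k)) * p^Suc (Suc k) * (1-p)^(m-k) * (real (Suc (Suc k)) * (real (Suc (Suc k)) - 1))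
        = (real (Suc (Suc m) choose Suc (Suc k)) * real (Suc (Suc k))) * real (Suc k) * p^2 * (p^k * (1-p)^(m-k))"
        by (simp add: algebra_simps power2_eq_square)
      also have "\<dots> = real (Suc (Suc m)) * (real (Suc m choose Suc k) * real (Suc k)) * p^2 * (p^k * (1-p)^(m-k))"
        unfolding e1 by (simp add: algebra_simps)
      also have "\<dots> = real (Suc (Suc m)) * real (Suc m) * p^2 * (real (m choose k) * p^k * (1-p)^(m-k))"
        unfolding e2 by (simp add: algebra_simps)
      finally show "real (Suc (Suc m) choose Suc (Suc k)) * p^Suc (Suc k) * (1-p)^(m-k) * (real (Suc (Suc k)) * (real (Suc (Suc k)) - 1))
        = real (Suc (Suc m)) * real (Suc m) * p^2 * (real (m choose k) * p^k * (1-p)^(m-k))" .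
    qed
    also have "\<dots> = real (Suc (Suc m)) * real (Suc m) * p^2 * (\<Sum>k\<le>m. real (m choose k) * p^k * (1-p)^(m-k))"
      by (simp add: sum_distrib_left)
    finally show ?thesis using nn binom_sum1[of m p] by simp
  qed
qed

lemma binom_var:
  fixes p :: real
  shows "(\<Sum>k\<le>n. real (n choose k) * p^k * (1-p)^(n-k) * (real k - real n * p)^2) = real n * p * (1 - p)"
proof -
  let ?b = "\<lambda>k. real (n choose k) * p^k * (1-p)^(n-k)"
  have "(\<Sum>k\<le>n. ?b k * (real k - real n * p)^2) =
     (\<Sum>k\<le>n. ?b k * (real k * (real k - 1))) + (1 - 2 * real n * p) * (\<Sum>k\<le>n. ?b k * real k) + (real n * p)^2 * (\<Sum>k\<le>n. ?b k)"
    by (simp add: sum_distrib_left sum.distrib[symmetric] power2_eq_square algebra_simps)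
  also have "\<dots> = real n * (real n - 1) * p^2 + (1 - 2 * real n * p) * (real n * p) + (real n * p)^2"
    using binom_fact2[of n p] binom_mean[of n p] binom_sum1[of n p] by simp
  also have "\<dots> = real n * p * (1 - p)" by (simp add: power2_eq_square algebra_simps)
  finally show ?thesis .
qed

lemma binom_good:
  fixes s n :: nat
  assumes s1: "1 \<le> s" and sn: "s \<le> n"
  defines "p \<equiv> real s / (4 * real n)"
  shows "(\<Sum>k\<le>n. real (n choose k) * p^k * (1-p)^(n-k) * (if s \<le> 64*k \<and> k \<le> s then 1 else 0)) \<ge> 3/40"
proof -
  let ?b = "\<lambda>k. real (n choose k) * p^k * (1-p)^(n-k)"
  let ?G = "\<lambda>k. (if s \<le> 64*k \<and> k \<le> s then 1 else 0::real)"
  have n0: "real n > 0" using s1 sn by simp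
  have p0: "0 < p" and p1: "p \<le> 1/4" using s1 sn n0 unfolding p_def by (auto simp: field_simps)
  have bnn: "?b k \<ge> 0" for k using p0 p1 by simp
  have mu: "real n * p = real s / 4" unfolding p_def using n0 by (simp add: field_simps)
  have hi: "(\<Sum>k\<le>n. ?b k * (real k / (real s + 1))) = real s / 4 / (real s + 1)"
  proof -
    have "(\<Sum>k\<le>n. ?b k * (real k / (real s + 1))) = (\<Sum>k\<le>n. ?b k * real k) / (real s + 1)"
      by (simp add: sum_divide_distrib)
    then show ?thesis using binom_mean[of n p] mu by simp
  qed
  have hiB: "real s / 4 / (real s + 1) \<le> 1/4" by (simp add: field_simps)
  show ?thesis
  proof (cases "s \<ge> 64")
    case True
    let ?c = "\<lambda>k. (real k - real n * p)^2 * (64 / (real s)^2)"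
    have pw: "1 \<le> ?G k + real k / (real s + 1) + ?c k" for k
    proof -
      have g0: "?G k \<ge> 0" by simp
      have h0: "real k / (real s + 1) \<ge> 0" by simp
      have c0: "?c k \<ge> 0" by simp
      show ?thesis
      proof (cases "s \<le> 64*k \<and> k \<le> s")
        case True then show ?thesis using h0 c0 by simp
      next
        case False
        then consider "k > s" | "64 * k < s" by linarith
        then show ?thesis
        proof cases
          case 1
          then have "real k \<ge> real s + 1" by simp
          then have "real k / (real s + 1) \<ge> 1" by (simp add: field_simps)
          then show ?thesis using g0 c0 by linarith
        next
          case 2
          then have "64 * real k < real s" by (metis of_nat_less_iff of_nat_mult of_nat_numeral)
          then have "real s / 4 - real k \<ge> real s / 8" by simp
          then have "(real s / 4 - real k)^2 \<ge> (real s / 8)^2"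
            using \<open>64 * real k < real s\<close> by (intro power_mono) auto
          then have "(real k - real n * p)^2 \<ge> (real s)^2 / 64" unfolding mu
            by (simp add: power2_eq_square algebra_simps)
          then have "?c k \<ge> 1" using s1 by (simp add: field_simps)
          then show ?thesis using g0 h0 by linarith
        qed
      qed
    qed
    have "1 = (\<Sum>k\<le>n. ?b k)" using binom_sum1[of n p] by simp
    also have "\<dots> \<le> (\<Sum>k\<le>n. ?b k * (?G k + real k / (real s + 1) + ?c k))"
      by (intro sum_mono) (use mult_left_mono[OF pw bnn] in simp)
    also have "\<dots> = (\<Sum>k\<le>n. ?b k * ?G k) + (\<Sum>k\<le>n. ?b k * (real k / (real s + 1)))
        + (\<Sum>k\<le>n. ?b k * (real k - real n * p)^2) * (64 / (real s)^2)"
      by (simp add: distrib_left sum.distrib sum_distrib_right mult.assoc sum_divide_distrib)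
    also have "(\<Sum>k\<le>n. ?b k * (real k - real n * p)^2) = real n * p * (1 - p)" by (rule binom_var)
    also have "real n * p * (1 - p) * (64 / (real s)^2) \<le> 1/4"
    proof -
      have "real n * p * (1 - p) \<le> real n * p" by (rule mult_left_le) (use p0 p1 n0 in auto)
      then have "real n * p * (1 - p) \<le> real s / 4" using mu by linarith
      then have "real n * p * (1 - p) * (64 / (real s)^2) \<le> real s / 4 * (64 / (real s)^2)"
        by (intro mult_right_mono) auto
      also have "\<dots> = 16 / real s" by (simp add: power2_eq_square field_simps)
      also have "\<dots> \<le> 1/4" using True by (simp add: field_simps)
      finally show ?thesis .
    qed
    ultimately show ?thesis using hi hiB by linarith
  next
    case False
    have pw: "1 \<le> ?G k + real k / (real s + 1) + (if k = 0 then 1 else 0)" for k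
    proof -
      have h0: "real k / (real s + 1) \<ge> 0" by simp
      show ?thesis
      proof (cases "k = 0")
        case True then show ?thesis using h0 by simp
      next
        case k0: False
        show ?thesis
        proof (cases "k > s")
          case True
          then have "real k \<ge> real s + 1" by simp
          then have "real k / (real s + 1) \<ge> 1" by (simp add: field_simps)
          then show ?thesis by simp
        next
          case f: False
          then have "s \<le> 64*k \<and> k \<le> s" using k0 False by simp
          then show ?thesis using h0 by simp
        qed
      qed
    qed
    have "1 = (\<Sum>k\<le>n. ?b k)" using binom_sum1[of n p] by simp
    also have "\<dots> \<le> (\<Sum>k\<le>n. ?b k * (?G k + real k / (real s + 1) + (if k = 0 then 1 else 0)))"
      by (intro sum_mono) (use mult_left_mono[OF pw bnn] in simp)
    also have "\<dots> = (\<Sum>k\<le>n. ?b k * ?G k) + (\<Sum>k\<le>n. ?b k * (real k / (real s + 1)))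
        + (\<Sum>k\<le>n. ?b k * (if k = 0 then 1 else 0))"
      by (simp add: distrib_left sum.distrib)
    also have "(\<Sum>k\<le>n. ?b k * (if k = 0 then 1 else 0)) = (1 - p)^n"
      by (simp add: if_distrib sum.delta cong: if_cong)
    also have "(1 - p)^n \<le> exp (- (real s / 4))"
    proof -
      have "(1 - p)^n \<le> exp (-p)^n" using p0 p1
        by (intro power_mono) (auto simp: exp_ge_add_one_self[of "-p", simplified] )
      also have "\<dots> = exp (- (real n * p))" by (simp add: exp_of_nat_mult[symmetric])
      finally show ?thesis using mu by simp
    qed
    also have "exp (- (real s / 4)) \<le> 1 / (1 + real s / 4)"
    proof -
      have "1 + real s / 4 \<le> exp (real s / 4)" by (rule exp_ge_add_one_self)
      then show ?thesis by (simp add: exp_minus field_simps)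
    qed
    finally have main: "1 \<le> (\<Sum>k\<le>n. ?b k * ?G k) + real s / 4 / (real s + 1) + 1 / (1 + real s / 4)"
      using hi by linarith
    have "real s / 4 / (real s + 1) + 1 / (1 + real s / 4) \<le> 1 - 3/40"
    proof -
      have s1': "real s \<ge> 1" using s1 by simp
      have "(real s - 1) * (9 * real s + 4) \<ge> 0" using s1' by (intro mult_nonneg_nonneg) auto
      then have "9 * (real s)^2 - 5 * real s - 4 \<ge> 0" by (simp add: power2_eq_square algebra_simps)
      then show ?thesis using s1' by (simp add: field_simps power2_eq_square)
    qed
    then show ?thesis using main by linarith
  qed
qed

definition q1 :: "real \<Rightarrow> real \<Rightarrow> real pmf" where
  "q1 p M = pmf_of_list [(0, 1-p), (M, p/2), (-M, p/2)]"

lemma q1_wf: "0 \<le> (p::real) \<Longrightarrow> p \<le> 1 \<Longrightarrow> pmf_of_list_wf [(0::real, 1-p), (M, p/2), (-M, p/2)]"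
  by (rule pmf_of_list_wfI) auto

lemma pmf_q1:
  assumes "0 \<le> p" "p \<le> 1" "M > 0"
  shows "pmf (q1 p M) x = (if x = 0 then 1 - p else if x = M \<or> x = -M then p/2 else 0)"
  using assms unfolding q1_def by (subst pmf_pmf_of_list[OF q1_wf]) auto

lemma map_q1_bern:
  assumes "0 \<le> p" "p \<le> 1" "M > 0"
  shows "map_pmf (\<lambda>x. x \<noteq> 0) (q1 p M) = bernoulli_pmf p"
proof (rule pmf_eqI)
  fix b :: bool
  have fin: "finite (set_pmf (q1 p M))" unfolding q1_def using assms by (intro finite_set_pmf_of_list q1_wf)
  have "pmf (map_pmf (\<lambda>x. x \<noteq> 0) (q1 p M)) b = measure (q1 p M) {x. (x \<noteq> 0) = b}"
    by (simp add: pmf_map vimage_def)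
  also have "\<dots> = (if b then p else 1 - p)"
    unfolding q1_def using assms by (subst measure_pmf_of_list[OF q1_wf]) auto
  finally show "pmf (map_pmf (\<lambda>x. x \<noteq> 0) (q1 p M)) b = pmf (bernoulli_pmf p) b" using assms by simp
qed

lemma pattern_binomial:
  assumes "0 \<le> p" "p \<le> 1" "M > 0"
  shows "map_pmf (\<lambda>\<theta>. card {i\<in>{..<d}. \<theta> i \<noteq> 0}) (Pi_pmf {..<d} 0 (\<lambda>_. q1 p M)) = binomial_pmf d p"
proof -
  have "binomial_pmf d p = map_pmf (\<lambda>f. card {x\<in>{..<d}. f x}) (Pi_pmf {..<d} False (\<lambda>_. bernoulli_pmf p))"
    using assms by (intro binomial_pmf_altdef') auto
  also have "Pi_pmf {..<d} False (\<lambda>_. bernoulli_pmf p) = Pi_pmf {..<d} False (\<lambda>_. map_pmf (\<lambda>x. x \<noteq> 0) (q1 p M))"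
    using map_q1_bern[OF assms] by simp
  also have "\<dots> = map_pmf (\<lambda>h. (\<lambda>x. x \<noteq> 0) \<circ> h) (Pi_pmf {..<d} 0 (\<lambda>_. q1 p M))"
    by (rule Pi_pmf_map) auto
  finally show ?thesis by (simp add: pmf.map_comp o_def)
qed

lemma pattern_prob:
  assumes "0 \<le> p" "p \<le> 1" "M > 0"
  shows "(\<Sum>\<theta>\<in>{\<theta>\<in>PiE_dflt {..<d} 0 (\<lambda>_. {0,M,-M}). G (card {i\<in>{..<d}. \<theta> i \<noteq> 0})}. \<Prod>i<d. pmf (q1 p M) (\<theta> i))
     = (\<Sum>k\<le>d. real (d choose k) * p^k * (1-p)^(d-k) * (if G k then 1 else 0))"
proof -
  let ?P = "Pi_pmf {..<d} 0 (\<lambda>_. q1 p M)"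
  let ?S = "{\<theta>\<in>PiE_dflt {..<d} 0 (\<lambda>_. {0,M,-M}). G (card {i\<in>{..<d}. \<theta> i \<noteq> 0})}"
  have finS: "finite ?S" by (rule finite_subset[of _ "PiE_dflt {..<d} 0 (\<lambda>_. {0,M,-M})"]) auto
  have "(\<Sum>\<theta>\<in>?S. \<Prod>i<d. pmf (q1 p M) (\<theta> i)) = (\<Sum>\<theta>\<in>?S. pmf ?P \<theta>)"
    by (intro sum.cong refl) (auto simp: pmf_Pi PiE_dflt_def)
  also have "\<dots> = measure ?P ?S" by (rule measure_measure_pmf_finite[symmetric, OF finS])
  also have "\<dots> = measure ?P {\<theta>. G (card {i\<in>{..<d}. \<theta> i \<noteq> 0})}"
  proof (rule measure_prob_cong_0)
    fix x assume x: "x \<in> {\<theta>. G (card {i\<in>{..<d}. \<theta> i \<noteq> 0})} - ?S"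
    show "pmf ?P x = 0"
    proof (cases "\<forall>y. y \<notin> {..<d} \<longrightarrow> x y = 0")
      case True
      with x obtain i where "i < d" "x i \<notin> {0,M,-M}" by (auto simp: PiE_dflt_def)
      then have "pmf (q1 p M) (x i) = 0" using assms by (simp add: pmf_q1)
      then show ?thesis using True \<open>i < d\<close> by (auto simp: pmf_Pi intro!: prod_zero)
    qed (auto simp: pmf_Pi)
  qed auto
  also have "\<dots> = measure (map_pmf (\<lambda>\<theta>. card {i\<in>{..<d}. \<theta> i \<noteq> 0}) ?P) {k. G k}"
    by (simp add: measure_map_pmf vimage_def)
  also have "\<dots> = measure (binomial_pmf d p) {k. G k}" using pattern_binomial[OF assms] by simp
  also have "\<dots> = measure_pmf.expectation (binomial_pmf d p) (\<lambda>k. if G k then 1 else 0)"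
  proof -
    have ind: "(\<lambda>k. if G k then 1 else 0::real) = indicator {k. G k}" by (auto simp: indicator_def)
    show ?thesis unfolding ind by (simp add: Bochner_Integration.integral_indicator)
  qed
  also have "\<dots> = (\<Sum>k\<le>d. real (d choose k) * p^k * (1-p)^(d-k) * (if G k then 1 else 0))"
    using assms by (subst expectation_binomial_pmf') auto
  finally show ?thesis .
qed

definition meas :: "real pmf \<Rightarrow> real measure" where
  "meas q = distr (measure_pmf q) borel id"

lemma meas_std:
  assumes fin: "finite (set_pmf q)"
    and m1: "measure_pmf.expectation q (\<lambda>x. x) = 0"
    and m2: "measure_pmf.expectation q (\<lambda>x. x^2) = 1"
  shows "meas q \<in> std_noise"
proof -
  have ps: "prob_space (meas q)" unfolding meas_def
    by (rule measure_pmf.prob_space_distr) simp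
  have i1: "integrable (meas q) (\<lambda>x. x)" unfolding meas_def
    by (subst integrable_distr_eq) (auto intro: integrable_measure_pmf_finite[OF fin])
  have i2: "integrable (meas q) (\<lambda>x. x^2)" unfolding meas_def
    by (subst integrable_distr_eq) (auto intro: integrable_measure_pmf_finite[OF fin])
  have e1: "(\<integral>x. x \<partial>meas q) = 0" unfolding meas_def using m1
    by (subst integral_distr) (auto simp: id_def)
  have e2: "(\<integral>x. x^2 \<partial>meas q) = 1" unfolding meas_def using m2
    by (subst integral_distr) auto
  show ?thesis unfolding std_noise_def using ps i1 i2 e1 e2 by (simp add: meas_def)
qed

lemma meas_tail: "measure (meas q) {x. \<bar>x\<bar> > t} = measure q {x. \<bar>x\<bar> > t}"
  unfolding meas_def by (subst measure_distr) (auto simp: vimage_def)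

definition radp :: "real pmf" where
  "radp = pmf_of_list [(1, 1/2), (-1, 1/2)]"

lemma radp_wf: "pmf_of_list_wf [(1::real, 1/2::real), (-1, 1/2)]"
  by (rule pmf_of_list_wfI) auto

lemma pmf_radp: "pmf radp x = (if x = 1 \<or> x = -1 then 1/2 else 0)"
  unfolding radp_def by (subst pmf_pmf_of_list[OF radp_wf]) auto

lemma set_radp: "set_pmf radp = {1, -1}"
  by (auto simp: set_pmf_eq pmf_radp)

lemma radp_std: "meas radp \<in> std_noise"
proof (rule meas_std)
  show "finite (set_pmf radp)" by (simp add: set_radp)
  show "measure_pmf.expectation radp (\<lambda>x. x) = 0"
    by (subst integral_measure_pmf_real[where A = "{1,-1}"]) (auto simp: set_radp pmf_radp)
  show "measure_pmf.expectation radp (\<lambda>x. x^2) = 1"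
    by (subst integral_measure_pmf_real[where A = "{1,-1}"]) (auto simp: set_radp pmf_radp)
qed

lemma radp_tail: "t \<ge> 2 \<Longrightarrow> measure (meas radp) {x. \<bar>x\<bar> > t} = 0"
  unfolding meas_tail radp_def by (subst measure_pmf_of_list[OF radp_wf]) auto

definition q0 :: "real \<Rightarrow> real \<Rightarrow> real \<Rightarrow> real pmf" where
  "q0 p M \<delta> = pmf_of_list [(\<delta>,(1-p)/2), (-\<delta>,(1-p)/2), (M+\<delta>,p/4), (M-\<delta>,p/4), (-M+\<delta>,p/4), (-M-\<delta>,p/4)]"

lemma q0_wf: "0 \<le> (p::real) \<Longrightarrow> p \<le> 1 \<Longrightarrow>
  pmf_of_list_wf [(\<delta>,(1-p)/2), (-\<delta>,(1-p)/2), (M+\<delta>,p/4), (M-\<delta>,p/4), (-M+\<delta>,p/4), (-M-\<delta>,p/4)]"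
  by (rule pmf_of_list_wfI) auto

locale noise_par =
  fixes p M \<delta> :: real
  assumes p0: "0 < p" and p1: "p \<le> 1" and M0: "0 < M" and d0: "0 < \<delta>" and d1: "\<delta> < 1"
    and Md1: "M \<noteq> \<delta>" and Md2: "M \<noteq> 2 * \<delta>" and var: "p * M^2 + \<delta>^2 = 1"
begin

lemma neqs: "\<delta> \<noteq> -\<delta>" "\<delta> \<noteq> M+\<delta>" "\<delta> \<noteq> M-\<delta>" "\<delta> \<noteq> -M+\<delta>" "\<delta> \<noteq> -M-\<delta>"
  "-\<delta> \<noteq> M+\<delta>" "-\<delta> \<noteq> M-\<delta>" "-\<delta> \<noteq> -M+\<delta>" "-\<delta> \<noteq> -M-\<delta>"
  "M+\<delta> \<noteq> M-\<delta>" "M+\<delta> \<noteq> -M+\<delta>" "M+\<delta> \<noteq> -M-\<delta>"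
  "M-\<delta> \<noteq> -M+\<delta>" "M-\<delta> \<noteq> -M-\<delta>" "-M+\<delta> \<noteq> -M-\<delta>"
  using M0 d0 Md1 Md2 by linarith+

lemmas neqs' = neqs neqs[symmetric]

lemma pmf_q0: "pmf (q0 p M \<delta>) x =
   (if x = \<delta> \<or> x = -\<delta> then (1-p)/2 else if x = M+\<delta> \<or> x = M-\<delta> \<or> x = -M+\<delta> \<or> x = -M-\<delta> then p/4 else 0)"
  unfolding q0_def using p0 p1 neqs' by (subst pmf_pmf_of_list[OF q0_wf]) auto


lemma set_q0: "set_pmf (q0 p M \<delta>) \<subseteq> {\<delta>, -\<delta>, M+\<delta>, M-\<delta>, -M+\<delta>, -M-\<delta>}"
  by (auto simp: set_pmf_eq pmf_q0 split: if_splits)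

lemma q0_std: "meas (q0 p M \<delta>) \<in> std_noise"
proof (rule meas_std)
  show "finite (set_pmf (q0 p M \<delta>))" by (rule finite_subset[OF set_q0]) auto
  show "measure_pmf.expectation (q0 p M \<delta>) (\<lambda>x. x) = 0"
    using set_q0 neqs' by (subst integral_measure_pmf_real[where A = "{\<delta>, -\<delta>, M+\<delta>, M-\<delta>, -M+\<delta>, -M-\<delta>}"])
       (auto simp: pmf_q0 field_simps)
  have "measure_pmf.expectation (q0 p M \<delta>) (\<lambda>x. x^2) = p * M^2 + \<delta>^2"
    using set_q0 neqs' by (subst integral_measure_pmf_real[where A = "{\<delta>, -\<delta>, M+\<delta>, M-\<delta>, -M+\<delta>, -M-\<delta>}"])
       (auto simp: pmf_q0 power2_eq_square algebra_simps)
  then show "measure_pmf.expectation (q0 p M \<delta>) (\<lambda>x. x^2) = 1" using var by simp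
qed


lemma q0_vals: "pmf (q0 p M \<delta>) \<delta> = (1-p)/2" "pmf (q0 p M \<delta>) (-\<delta>) = (1-p)/2"
   "pmf (q0 p M \<delta>) (M+\<delta>) = p/4" "pmf (q0 p M \<delta>) (M-\<delta>) = p/4"
   "pmf (q0 p M \<delta>) (-M+\<delta>) = p/4" "pmf (q0 p M \<delta>) (-M-\<delta>) = p/4"
  by (simp_all only: pmf_q0) (use neqs' in \<open>simp_all\<close>)

lemma v2: "pmf (q0 p M \<delta>) (\<delta> - M) = p/4" using q0_vals(5) by (simp add: algebra_simps)

lemma pmf_q0_prod:
  assumes "t \<in> {0, M, -M}" "e \<in> {1, -1}"
  shows "pmf (q0 p M \<delta>) (t + \<delta> * e) = pmf (q1 p M) t * pmf radp e"
proof -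
  have q1v: "pmf (q1 p M) 0 = 1 - p" "pmf (q1 p M) M = p/2" "pmf (q1 p M) (-M) = p/2"
    using p0 p1 M0 by (simp_all add: pmf_q1)
  have rv: "pmf radp 1 = 1/2" "pmf radp (-1) = 1/2" by (simp_all add: pmf_radp)
  from assms show ?thesis
  proof -
    from assms show ?thesis
      by (elim insertE emptyE) (simp_all add: q1v rv q0_vals v2 algebra_simps)
  qed
qed

lemma q0_tail:
  assumes "t \<ge> 2"
  shows "measure (meas (q0 p M \<delta>)) {x. \<bar>x\<bar> > t} \<le> (if t < M + \<delta> then p else 0)"
proof -
  let ?q = "q0 p M \<delta>"
  have "measure (meas ?q) {x. \<bar>x\<bar> > t} = measure ?q ({x. \<bar>x\<bar> > t} \<inter> set_pmf ?q)"
    by (simp add: meas_tail measure_Int_set_pmf)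
  also have "\<dots> \<le> (if t < M + \<delta> then p else 0)"
  proof (cases "t < M + \<delta>")
    case True
    have sub: "{x. \<bar>x\<bar> > t} \<inter> set_pmf ?q \<subseteq> {M+\<delta>, M-\<delta>, -M+\<delta>, -M-\<delta>}"
      using set_q0 assms d0 d1 by auto
    have "measure ?q ({x. \<bar>x\<bar> > t} \<inter> set_pmf ?q) \<le> measure ?q {M+\<delta>, M-\<delta>, -M+\<delta>, -M-\<delta>}"
      by (rule measure_pmf.finite_measure_mono[OF sub]) simp
    also have "\<dots> = p/4 + p/4 + p/4 + p/4"
      using neqs' by (subst measure_measure_pmf_finite) (simp_all add: q0_vals v2)
    finally show ?thesis using True by simp
  next
    case False
    have "{x. \<bar>x\<bar> > t} \<inter> set_pmf ?q = {}"
      using set_q0 False d0 M0 by force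
    then show ?thesis using p0 by simp
  qed
  finally show ?thesis .
qed

end

lemma nn_integral_ge_points:
  assumes fin: "finite F" and sets: "\<And>y. y \<in> F \<Longrightarrow> {y} \<in> sets N"
  shows "(\<Sum>y\<in>F. f y * emeasure N {y}) \<le> (\<integral>\<^sup>+ x. f x \<partial>N)"
proof -
  have "(\<Sum>y\<in>F. f y * emeasure N {y}) = (\<integral>\<^sup>+ x. (\<Sum>y\<in>F. f y * indicator {y} x) \<partial>N)"
    using sets by (subst nn_integral_sum) (auto simp: nn_integral_cmult_indicator)
  also have "\<dots> \<le> (\<integral>\<^sup>+ x. f x \<partial>N)"
  proof (rule nn_integral_mono)
    fix x
    have "(\<Sum>y\<in>F. f y * indicator {y} x) = (if x \<in> F then f x else 0)"
      using fin by (simp add: indicator_def if_distrib sum.delta' cong: if_cong)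
    then show "(\<Sum>y\<in>F. f y * indicator {y} x) \<le> f x" by simp
  qed
  finally show ?thesis .
qed

lemma obs_point:
  assumes sig: "\<sigma> > 0" and y: "y \<in> PiE {..<d} (\<lambda>_. UNIV)"
  shows "{y} \<in> sets (obs_law d \<theta> \<sigma> (meas q))"
    and "emeasure (obs_law d \<theta> \<sigma> (meas q)) {y} = (\<Prod>i<d. ennreal (pmf q ((y i - \<theta> i) / \<sigma>)))"
proof -
  let ?N = "\<lambda>i. distr (meas q) borel (\<lambda>x. \<theta> i + \<sigma> * x)"
  have ys: "{y} = PiE {..<d} (\<lambda>i. {y i})" using y by (simp add: PiE_singleton PiE_iff)
  show "{y} \<in> sets (obs_law d \<theta> \<sigma> (meas q))" unfolding obs_law_def ys
    by (intro sets_PiM_I_finite) auto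
  have psN: "prob_space (?N i)" for i unfolding meas_def
    by (intro prob_space.prob_space_distr measure_pmf.prob_space_distr) auto
  interpret product_sigma_finite ?N
    unfolding product_sigma_finite_def using psN by (auto intro: prob_space_imp_sigma_finite)
  have "emeasure (obs_law d \<theta> \<sigma> (meas q)) {y} = (\<Prod>i<d. emeasure (?N i) {y i})"
    unfolding obs_law_def ys by (subst emeasure_PiM) auto
  also have "\<dots> = (\<Prod>i<d. ennreal (pmf q ((y i - \<theta> i) / \<sigma>)))"
  proof (rule prod.cong[OF refl])
    fix i
    have pre: "(\<lambda>x. \<theta> i + \<sigma> * x) -` {y i} = {(y i - \<theta> i) / \<sigma>}"
      using sig by (auto simp: field_simps)
    have "emeasure (?N i) {y i} = emeasure (measure_pmf q) {(y i - \<theta> i) / \<sigma>}"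
      unfolding meas_def by (subst emeasure_distr) (auto simp: emeasure_distr pre)
    then show "emeasure (?N i) {y i} = ennreal (pmf q ((y i - \<theta> i) / \<sigma>))"
      by (simp add: emeasure_pmf_single)
  qed
  finally show "emeasure (obs_law d \<theta> \<sigma> (meas q)) {y} = (\<Prod>i<d. ennreal (pmf q ((y i - \<theta> i) / \<sigma>)))" .
qed

context noise_par begin

lemma atom_inj:
  assumes "t \<in> {0, M, -M}" "t' \<in> {0, M, -M}" "e \<in> {1, -1}" "e' \<in> {1, -1}"
    and "t + \<delta> * e = t' + \<delta> * e'"
  shows "t = t' \<and> e = e'"
  using assms neqs' M0 d0 by (elim insertE emptyE) (simp_all add: algebra_simps)

end

lemma l2norm_pattern:
  assumes "\<theta> \<in> PiE_dflt {..<d} 0 (\<lambda>_. {0, M, -M})"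
  shows "l2norm d \<theta> = \<bar>M\<bar> * sqrt (real (card {i\<in>{..<d}. \<theta> i \<noteq> 0}))"
proof -
  have "(\<Sum>i<d. (\<theta> i)\<^sup>2) = (\<Sum>i<d. if \<theta> i \<noteq> 0 then M^2 else 0)"
  proof (rule sum.cong[OF refl])
    fix i assume "i \<in> {..<d}"
    then have "\<theta> i \<in> {0, M, -M}" using assms unfolding PiE_dflt_def by blast
    then show "(\<theta> i)\<^sup>2 = (if \<theta> i \<noteq> 0 then M^2 else 0)" by (elim insertE emptyE) simp_all
  qed
  also have "\<dots> = (\<Sum>i\<in>{i\<in>{..<d}. \<theta> i \<noteq> 0}. M^2)"
    by (rule sum.inter_filter[symmetric]) simp
  also have "\<dots> = M^2 * real (card {i\<in>{..<d}. \<theta> i \<noteq> 0})" by simp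
  finally have "l2norm d \<theta> = sqrt (M^2 * real (card {i\<in>{..<d}. \<theta> i \<noteq> 0}))" unfolding l2norm_def by simp
  also have "\<dots> = \<bar>M\<bar> * sqrt (real (card {i\<in>{..<d}. \<theta> i \<noteq> 0}))" by (simp only: real_sqrt_mult real_sqrt_abs)
  finally show ?thesis .
qed

lemma loss_mono: "l \<in> loss_class \<Longrightarrow> 0 \<le> x \<Longrightarrow> x \<le> y \<Longrightarrow> l x \<le> l y"
proof -
  assume "l \<in> loss_class" "0 \<le> x" "x \<le> y"
  moreover have "\<forall>x y. 0 \<le> x \<longrightarrow> x \<le> y \<longrightarrow> l x \<le> l y" using \<open>l \<in> loss_class\<close> by (simp add: loss_class_def)
  ultimately show "l x \<le> l y" by simp
qed

lemma loss_nonneg: "l \<in> loss_class \<Longrightarrow> 0 \<le> x \<Longrightarrow> 0 \<le> l x"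
  by (simp add: loss_class_def)

lemma pair_loss:
  assumes l: "l \<in> loss_class" and x0: "0 \<le> x0" and r: "r > 0" and dl: "0 < \<delta>" "\<delta> \<le> 1"
    and key: "x0 \<le> r * n / 2" and n: "n \<ge> 0"
  shows "l x0 \<le> l (r * \<bar>(t - 0) / 1\<bar>) + l (r * \<bar>(t - n) / \<delta>\<bar>)"
proof -
  have a: "\<bar>(t - n) / \<delta>\<bar> \<ge> \<bar>t - n\<bar>" using dl
    by (simp add: abs_divide le_divide_eq mult_left_le)
  have b0: "0 \<le> l (r * \<bar>(t - 0) / 1\<bar>)" by (rule loss_nonneg[OF l]) (use r in simp)
  have b1: "0 \<le> l (r * \<bar>(t - n) / \<delta>\<bar>)" by (rule loss_nonneg[OF l]) (use r in simp)
  show ?thesis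
  proof (cases "\<bar>t\<bar> \<ge> n / 2")
    case True
    have "r * (n / 2) \<le> r * \<bar>t\<bar>" using True r by (intro mult_left_mono) auto
    then have "x0 \<le> r * \<bar>(t - 0) / 1\<bar>" using key by (simp only: diff_zero div_by_1)
    then have "l x0 \<le> l (r * \<bar>(t - 0) / 1\<bar>)" by (rule loss_mono[OF l x0])
    then show ?thesis using b1 by linarith
  next
    case False
    then have "\<bar>t - n\<bar> \<ge> n / 2" by linarith
    then have "\<bar>(t - n) / \<delta>\<bar> \<ge> n / 2" using a by linarith
    then have "r * (n / 2) \<le> r * \<bar>(t - n) / \<delta>\<bar>" using r by (intro mult_left_mono) auto
    then have "x0 \<le> r * \<bar>(t - n) / \<delta>\<bar>" using key by linarith
    then have "l x0 \<le> l (r * \<bar>(t - n) / \<delta>\<bar>)" by (rule loss_mono[OF l x0])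
    then show ?thesis using b0 by linarith
  qed
qed

lemma prod_radp: "\<epsilon> \<in> PiE {..<d} (\<lambda>_. {1::real, -1}) \<Longrightarrow> (\<Prod>i<d. pmf radp (\<epsilon> i)) = (1/2)^d"
proof -
  assume e: "\<epsilon> \<in> PiE {..<d} (\<lambda>_. {1::real, -1})"
  have "(\<Prod>i<d. pmf radp (\<epsilon> i)) = (\<Prod>i<d. 1/2)"
  proof (rule prod.cong[OF refl])
    fix i assume "i \<in> {..<d}"
    then have "\<epsilon> i \<in> {1, -1}" using e by (auto simp: PiE_iff)
    then show "pmf radp (\<epsilon> i) = 1/2" by (auto simp: pmf_radp)
  qed
  then show ?thesis by simp
qed

context noise_par begin

lemma PiE_dflt_val: "f \<in> PiE_dflt A dflt B \<Longrightarrow> i \<in> A \<Longrightarrow> f i \<in> B i"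
  unfolding PiE_dflt_def by blast

lemma PiE_dflt_out: "f \<in> PiE_dflt A dflt B \<Longrightarrow> i \<notin> A \<Longrightarrow> f i = dflt"
  unfolding PiE_dflt_def by blast

lemma pat_val: assumes "\<theta> \<in> PiE_dflt {..<d} 0 (\<lambda>_. {0,M,-M})" "i < d" shows "\<theta> i \<in> {0,M,-M}"
proof -
  have "i \<in> {..<d}" using assms(2) by (simp only: lessThan_iff)
  show ?thesis by (rule PiE_dflt_val[OF assms(1) \<open>i \<in> {..<d}\<close>])
qed

lemma pat_out: assumes "\<theta> \<in> PiE_dflt {..<d} 0 (\<lambda>_. {0,M,-M})" "\<not> i < d" shows "\<theta> i = 0"
proof -
  have "i \<notin> {..<d}" using assms(2) by simp
  show ?thesis by (rule PiE_dflt_out[OF assms(1) \<open>i \<notin> {..<d}\<close>])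
qed

lemma eps_val: assumes "\<epsilon> \<in> PiE {..<d} (\<lambda>_. {1::real,-1})" "i < d" shows "\<epsilon> i \<in> {1,-1}"
proof -
  have "i \<in> {..<d}" using assms(2) by (simp only: lessThan_iff)
  show ?thesis by (rule PiE_mem[OF assms(1) \<open>i \<in> {..<d}\<close>])
qed

lemma eps_out: assumes "\<epsilon> \<in> PiE {..<d} (\<lambda>_. {1::real,-1})" "\<not> i < d" shows "\<epsilon> i = undefined"
proof -
  have "i \<notin> {..<d}" using assms(2) by simp
  show ?thesis by (rule PiE_arb[OF assms(1) \<open>i \<notin> {..<d}\<close>])
qed

lemma yinj:
  assumes th: "\<theta> \<in> PiE_dflt {..<d} 0 (\<lambda>_. {0,M,-M})" "\<theta>' \<in> PiE_dflt {..<d} 0 (\<lambda>_. {0,M,-M})"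
    and ep: "\<epsilon> \<in> PiE {..<d} (\<lambda>_. {1::real,-1})" "\<epsilon>' \<in> PiE {..<d} (\<lambda>_. {1::real,-1})"
    and eq: "(\<lambda>i\<in>{..<d}. \<theta> i + \<delta> * \<epsilon> i) = (\<lambda>i\<in>{..<d}. \<theta>' i + \<delta> * \<epsilon>' i)"
  shows "\<theta> = \<theta>' \<and> \<epsilon> = \<epsilon>'"
proof -
  have c: "\<theta> i = \<theta>' i \<and> \<epsilon> i = \<epsilon>' i" if i: "i < d" for i
  proof (rule atom_inj)
    show "\<theta> i \<in> {0, M, -M}" by (rule pat_val[OF th(1) i])
    show "\<theta>' i \<in> {0, M, -M}" by (rule pat_val[OF th(2) i])
    show "\<epsilon> i \<in> {1, -1}" by (rule eps_val[OF ep(1) i])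
    show "\<epsilon>' i \<in> {1, -1}" by (rule eps_val[OF ep(2) i])
    have "(\<lambda>i\<in>{..<d}. \<theta> i + \<delta> * \<epsilon> i) i = (\<lambda>i\<in>{..<d}. \<theta>' i + \<delta> * \<epsilon>' i) i" using eq by simp
    then show "\<theta> i + \<delta> * \<epsilon> i = \<theta>' i + \<delta> * \<epsilon>' i" using i by simp
  qed
  have "\<theta> = \<theta>'"
  proof
    fix i show "\<theta> i = \<theta>' i"
    proof (cases "i < d")
      case True then show ?thesis using c by blast
    next
      case False then show ?thesis using pat_out[OF th(1) False] pat_out[OF th(2) False] by simp
    qed
  qed
  moreover have "\<epsilon> = \<epsilon>'"
  proof
    fix i show "\<epsilon> i = \<epsilon>' i"
    proof (cases "i < d")
      case True then show ?thesis using c by blast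
    next
      case False then show ?thesis using eps_out[OF ep(1) False] eps_out[OF ep(2) False] by simp
    qed
  qed
  ultimately show ?thesis by simp
qed

lemma lower0:
  fixes g :: "(nat \<Rightarrow> real) \<Rightarrow> real"
  assumes g: "\<And>z. g z \<ge> 0"
  shows "ennreal (\<Sum>\<theta>\<in>PiE_dflt {..<d} 0 (\<lambda>_. {0,M,-M}). \<Sum>\<epsilon>\<in>PiE {..<d} (\<lambda>_. {1,-1}).
            g (\<lambda>i\<in>{..<d}. \<theta> i + \<delta> * \<epsilon> i) * ((\<Prod>i<d. pmf (q1 p M) (\<theta> i)) * (1/2)^d))
     \<le> (\<integral>\<^sup>+ z. ennreal (g z) \<partial>obs_law d (\<lambda>_. 0) 1 (meas (q0 p M \<delta>)))"
proof -
  let ?Th = "PiE_dflt {..<d} 0 (\<lambda>_. {0,M,-M})"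
  let ?E = "PiE {..<d} (\<lambda>_. {1::real,-1})"
  define yf where "yf = (\<lambda>(\<theta>::nat\<Rightarrow>real) (\<epsilon>::nat\<Rightarrow>real). (\<lambda>i\<in>{..<d}. \<theta> i + \<delta> * \<epsilon> i))"
  let ?y = "\<lambda>z. yf (fst z) (snd z)"
  let ?N = "obs_law d (\<lambda>_. 0) 1 (meas (q0 p M \<delta>))"
  let ?W = "\<lambda>\<theta>. (\<Prod>i<d. pmf (q1 p M) (\<theta> i))"
  have finTh: "finite ?Th" by (intro finite_PiE_dflt) auto
  have finE: "finite ?E" by (intro finite_PiE) auto
  have inj: "inj_on ?y (?Th \<times> ?E)"
  proof (rule inj_onI)
    fix a b assume a: "a \<in> ?Th \<times> ?E" and b: "b \<in> ?Th \<times> ?E" and eq: "?y a = ?y b"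
    have "fst a = fst b \<and> snd a = snd b"
      by (rule yinj) (use a b eq in \<open>simp_all only: mem_Times_iff yf_def\<close>)
    then show "a = b" by (simp add: prod_eq_iff)
  qed
  have pt: "emeasure ?N {yf \<theta> \<epsilon>} = ennreal (?W \<theta> * (1/2)^d)" if th: "\<theta> \<in> ?Th" and ep: "\<epsilon> \<in> ?E" for \<theta> \<epsilon>
  proof -
    have yPi: "yf \<theta> \<epsilon> \<in> PiE {..<d} (\<lambda>_. UNIV)" unfolding yf_def by (simp only: restrict_PiE_iff) simp
    have "emeasure ?N {yf \<theta> \<epsilon>} = (\<Prod>i<d. ennreal (pmf (q0 p M \<delta>) ((yf \<theta> \<epsilon> i - 0) / 1)))"
      by (rule obs_point(2)[OF _ yPi]) simp
    also have "\<dots> = (\<Prod>i<d. ennreal (pmf (q1 p M) (\<theta> i) * pmf radp (\<epsilon> i)))"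
    proof (rule prod.cong[OF refl])
      fix i assume i: "i \<in> {..<d}"
      then have i': "i < d" by simp
      have "pmf (q0 p M \<delta>) (\<theta> i + \<delta> * \<epsilon> i) = pmf (q1 p M) (\<theta> i) * pmf radp (\<epsilon> i)"
        by (rule pmf_q0_prod[OF pat_val[OF th i'] eps_val[OF ep i']])
      moreover have "(yf \<theta> \<epsilon> i - 0) / 1 = \<theta> i + \<delta> * \<epsilon> i" using i unfolding yf_def by simp
      ultimately show "ennreal (pmf (q0 p M \<delta>) ((yf \<theta> \<epsilon> i - 0) / 1)) = ennreal (pmf (q1 p M) (\<theta> i) * pmf radp (\<epsilon> i))"
        by simp
    qed
    also have "\<dots> = ennreal (\<Prod>i<d. pmf (q1 p M) (\<theta> i) * pmf radp (\<epsilon> i))"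
      by (rule prod_ennreal) simp
    also have "(\<Prod>i<d. pmf (q1 p M) (\<theta> i) * pmf radp (\<epsilon> i)) = ?W \<theta> * (1/2)^d"
      unfolding prod.distrib prod_radp[OF ep] ..
    finally show ?thesis .
  qed
  have nn: "0 \<le> g (?y z) * (?W (fst z) * (1/2)^d)" for z
    using g by (intro mult_nonneg_nonneg prod_nonneg) auto
  have "(\<Sum>\<theta>\<in>?Th. \<Sum>\<epsilon>\<in>?E. g (yf \<theta> \<epsilon>) * (?W \<theta> * (1/2)^d))
      = (\<Sum>z\<in>?Th \<times> ?E. g (?y z) * (?W (fst z) * (1/2)^d))"
    by (simp only: sum.cartesian_product prod.case fst_conv snd_conv case_prod_beta')
  then have "ennreal (\<Sum>\<theta>\<in>?Th. \<Sum>\<epsilon>\<in>?E. g (yf \<theta> \<epsilon>) * (?W \<theta> * (1/2)^d))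
      = (\<Sum>z\<in>?Th \<times> ?E. ennreal (g (?y z) * (?W (fst z) * (1/2)^d)))"
    using sum_ennreal[of "?Th \<times> ?E" "\<lambda>z. g (?y z) * (?W (fst z) * (1/2)^d)", OF nn] by simp
  also have "\<dots> = (\<Sum>z\<in>?Th \<times> ?E. ennreal (g (?y z)) * emeasure ?N {?y z})"
  proof (rule sum.cong[OF refl])
    fix z assume z: "z \<in> ?Th \<times> ?E"
    have "emeasure ?N {?y z} = ennreal (?W (fst z) * (1/2)^d)"
      by (rule pt) (use z in \<open>simp_all only: mem_Times_iff\<close>)
    moreover have "ennreal (g (?y z) * (?W (fst z) * (1/2)^d)) = ennreal (g (?y z)) * ennreal (?W (fst z) * (1/2)^d)"
      by (rule ennreal_mult) (use g in \<open>auto intro!: prod_nonneg mult_nonneg_nonneg\<close>)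
    ultimately show "ennreal (g (?y z) * (?W (fst z) * (1/2)^d)) = ennreal (g (?y z)) * emeasure ?N {?y z}" by simp
  qed
  also have "\<dots> = (\<Sum>w\<in>?y ` (?Th \<times> ?E). ennreal (g w) * emeasure ?N {w})"
    by (rule sum.reindex[OF inj, symmetric, unfolded comp_def])
  also have "\<dots> \<le> (\<integral>\<^sup>+ z. ennreal (g z) \<partial>?N)"
  proof (rule nn_integral_ge_points)
    show "finite (?y ` (?Th \<times> ?E))" using finTh finE by simp
    fix w assume "w \<in> ?y ` (?Th \<times> ?E)"
    then obtain z where "w = ?y z" by blast
    have yPi: "?y z \<in> PiE {..<d} (\<lambda>_. UNIV)" unfolding yf_def by (simp only: restrict_PiE_iff) simp
    show "{w} \<in> sets ?N" unfolding \<open>w = ?y z\<close> by (rule obs_point(1)[OF _ yPi]) simp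
  qed
  finally show ?thesis unfolding yf_def by simp
qed

lemma lower1:
  fixes g :: "(nat \<Rightarrow> real) \<Rightarrow> real"
  assumes g: "\<And>z. g z \<ge> 0"
  shows "ennreal (\<Sum>\<epsilon>\<in>PiE {..<d} (\<lambda>_. {1,-1}). g (\<lambda>i\<in>{..<d}. \<theta> i + \<delta> * \<epsilon> i) * (1/2)^d)
     \<le> (\<integral>\<^sup>+ z. ennreal (g z) \<partial>obs_law d \<theta> \<delta> (meas radp))"
proof -
  let ?E = "PiE {..<d} (\<lambda>_. {1::real,-1})"
  define yf where "yf = (\<lambda>(\<epsilon>::nat\<Rightarrow>real). (\<lambda>i\<in>{..<d}. \<theta> i + \<delta> * \<epsilon> i))"
  let ?N = "obs_law d \<theta> \<delta> (meas radp)"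
  have finE: "finite ?E" by (intro finite_PiE) auto
  have inj: "inj_on yf ?E"
  proof (rule inj_onI)
    fix a b assume a: "a \<in> ?E" and b: "b \<in> ?E" and eq: "yf a = yf b"
    show "a = b"
    proof
      fix i show "a i = b i"
      proof (cases "i < d")
        case True
        have "yf a i = yf b i" using eq by simp
        then have "\<theta> i + \<delta> * a i = \<theta> i + \<delta> * b i" using True unfolding yf_def by simp
        then show ?thesis using d0 by simp
      next
        case False then show ?thesis using eps_out[OF a False] eps_out[OF b False] by simp
      qed
    qed
  qed
  have pt: "emeasure ?N {yf \<epsilon>} = ennreal ((1/2)^d)" if ep: "\<epsilon> \<in> ?E" for \<epsilon>
  proof -
    have yPi: "yf \<epsilon> \<in> PiE {..<d} (\<lambda>_. UNIV)" unfolding yf_def by (simp only: restrict_PiE_iff) simp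
    have "emeasure ?N {yf \<epsilon>} = (\<Prod>i<d. ennreal (pmf radp ((yf \<epsilon> i - \<theta> i) / \<delta>)))"
      by (rule obs_point(2)[OF _ yPi]) (rule d0)
    also have "\<dots> = (\<Prod>i<d. ennreal (pmf radp (\<epsilon> i)))"
    proof (rule prod.cong[OF refl])
      fix i assume i: "i \<in> {..<d}"
      have "(yf \<epsilon> i - \<theta> i) / \<delta> = \<epsilon> i" using i d0 unfolding yf_def by simp
      then show "ennreal (pmf radp ((yf \<epsilon> i - \<theta> i) / \<delta>)) = ennreal (pmf radp (\<epsilon> i))" by simp
    qed
    also have "\<dots> = ennreal (\<Prod>i<d. pmf radp (\<epsilon> i))"
      by (rule prod_ennreal) simp
    also have "(\<Prod>i<d. pmf radp (\<epsilon> i)) = (1/2)^d" by (rule prod_radp[OF ep])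
    finally show ?thesis .
  qed
  have nn: "0 \<le> g (yf z) * (1/2)^d" for z using g by simp
  have "ennreal (\<Sum>\<epsilon>\<in>?E. g (yf \<epsilon>) * (1/2)^d) = (\<Sum>\<epsilon>\<in>?E. ennreal (g (yf \<epsilon>) * (1/2)^d))"
    using sum_ennreal[of ?E "\<lambda>z. g (yf z) * (1/2)^d", OF nn] by simp
  also have "\<dots> = (\<Sum>\<epsilon>\<in>?E. ennreal (g (yf \<epsilon>)) * emeasure ?N {yf \<epsilon>})"
  proof (rule sum.cong[OF refl])
    fix z assume z: "z \<in> ?E"
    have "ennreal (g (yf z) * (1/2)^d) = ennreal (g (yf z)) * ennreal ((1/2)^d)"
      by (rule ennreal_mult) (use g in auto)
    then show "ennreal (g (yf z) * (1/2)^d) = ennreal (g (yf z)) * emeasure ?N {yf z}" using pt[OF z] by simp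
  qed
  also have "\<dots> = (\<Sum>w\<in>yf ` ?E. ennreal (g w) * emeasure ?N {w})"
    by (rule sum.reindex[OF inj, symmetric, unfolded comp_def])
  also have "\<dots> \<le> (\<integral>\<^sup>+ z. ennreal (g z) \<partial>?N)"
  proof (rule nn_integral_ge_points)
    show "finite (yf ` ?E)" using finE by simp
    fix w assume "w \<in> yf ` ?E"
    then obtain z where "w = yf z" by blast
    have yPi: "yf z \<in> PiE {..<d} (\<lambda>_. UNIV)" unfolding yf_def by (simp only: restrict_PiE_iff) simp
    show "{w} \<in> sets ?N" unfolding \<open>w = yf z\<close> by (rule obs_point(1)[OF _ yPi]) (rule d0)
  qed
  finally show ?thesis unfolding yf_def by simp
qed

end

context noise_par begin

lemma core:
  fixes l :: "real \<Rightarrow> real" and r x0 :: real and s d :: nat and G and T :: "(nat \<Rightarrow> real) \<Rightarrow> real"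
  assumes s1: "1 \<le> s" and sd: "s \<le> d" and pdef: "p = real s / (4 * real d)"
    and G0: "meas (q0 p M \<delta>) \<in> G" and G1: "meas radp \<in> G"
    and l: "l \<in> loss_class" and x0: "0 \<le> x0" and r: "r > 0"
    and key: "x0 \<le> r * M * sqrt (real s) / 16"
  shows "ennreal (l x0 * 3 / 80) \<le> worst_risk l r d s G T"
proof -
  define Th where "Th = PiE_dflt {..<d} 0 (\<lambda>_. {0,M,-M})"
  define E where "E = PiE {..<d} (\<lambda>_::nat. {1::real,-1})"
  define K where "K = (\<lambda>\<theta>::nat\<Rightarrow>real. card {i\<in>{..<d}. \<theta> i \<noteq> 0})"
  define Good where "Good = {\<theta>\<in>Th. s \<le> 64 * K \<theta> \<and> K \<theta> \<le> s}"
  define yf where "yf = (\<lambda>(\<theta>::nat\<Rightarrow>real) (\<epsilon>::nat\<Rightarrow>real). (\<lambda>i\<in>{..<d}. \<theta> i + \<delta> * \<epsilon> i))"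
  define W where "W = (\<lambda>\<theta>::nat\<Rightarrow>real. \<Prod>i<d. pmf (q1 p M) (\<theta> i))"
  define g0 where "g0 = (\<lambda>z. l (r * \<bar>(T z - l2norm d (\<lambda>_. 0)) / 1\<bar>))"
  define g1 where "g1 = (\<lambda>\<theta> z. l (r * \<bar>(T z - l2norm d \<theta>) / \<delta>\<bar>))"
  define Wr where "Wr = worst_risk l r d s G T"
  have finTh: "finite Th" unfolding Th_def by (intro finite_PiE_dflt) auto
  have finE: "finite E" unfolding E_def by (intro finite_PiE) auto
  have cardE: "card E = 2^d" unfolding E_def by (simp add: card_PiE) (simp add: numeral_2_eq_2)
  have GoodTh: "Good \<subseteq> Th" unfolding Good_def by blast
  have Wnn: "W \<theta> \<ge> 0" for \<theta> unfolding W_def by (intro prod_nonneg) auto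
  have g0nn: "g0 z \<ge> 0" for z unfolding g0_def by (rule loss_nonneg[OF l]) (use r in simp)
  have g1nn: "g1 \<theta> z \<ge> 0" for \<theta> z unfolding g1_def by (rule loss_nonneg[OF l]) (use r in simp)
  have p01: "0 \<le> p" "p \<le> 1" using p0 p1 by auto
  have PGood: "(\<Sum>\<theta>\<in>Good. W \<theta>) \<ge> 3/40"
  proof -
    have "(\<Sum>\<theta>\<in>Good. W \<theta>) = (\<Sum>k\<le>d. real (d choose k) * p^k * (1-p)^(d-k) * (if s \<le> 64*k \<and> k \<le> s then 1 else 0))"
      unfolding Good_def Th_def K_def W_def by (rule pattern_prob[OF p01 M0])
    also have "\<dots> \<ge> 3/40" unfolding pdef by (rule binom_good[OF s1 sd])
    finally show ?thesis .
  qed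
  have PTh: "(\<Sum>\<theta>\<in>Th. W \<theta>) = 1"
  proof -
    have "(\<Sum>\<theta>\<in>{\<theta>\<in>Th. (\<lambda>_. True) (K \<theta>)}. W \<theta>) = (\<Sum>k\<le>d. real (d choose k) * p^k * (1-p)^(d-k) * (if (\<lambda>_. True) k then 1 else 0))"
      unfolding Th_def K_def W_def by (rule pattern_prob[OF p01 M0])
    also have "\<dots> = 1" using binom_sum1[of d p] by simp
    finally show ?thesis by simp
  qed
  have PG1: "(\<Sum>\<theta>\<in>Good. W \<theta>) \<le> 1"
    using sum_mono2[OF finTh GoodTh, of W] Wnn PTh by simp
  have r0: "risk l r d T (\<lambda>_. 0) 1 (meas (q0 p M \<delta>)) \<le> Wr"
  proof -
    have sp: "(\<lambda>_. 0) \<in> sparse_set d s" unfolding sparse_set_def by simp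
    have one: "(0::real) < 1" by simp
    show ?thesis unfolding Wr_def worst_risk_def
      by (rule Sup_upper, rule CollectI, rule exI[of _ "meas (q0 p M \<delta>)"], rule exI[of _ 1], rule exI[of _ "\<lambda>_. 0"])
         (intro conjI refl G0 one sp)
  qed
  have r1: "risk l r d T \<theta> \<delta> (meas radp) \<le> Wr" if th: "\<theta> \<in> Good" for \<theta>
  proof -
    have thT: "\<theta> \<in> Th" and Ks: "K \<theta> \<le> s" using th unfolding Good_def by auto
    have "\<theta> \<in> sparse_set d s" unfolding sparse_set_def
    proof (intro CollectI conjI allI impI)
      fix i :: nat assume "d \<le> i"
      then have "\<not> i < d" by simp
      then show "\<theta> i = 0" by (rule pat_out[OF thT[unfolded Th_def]])
    next
      have "{i. i < d \<and> \<theta> i \<noteq> 0} = {i\<in>{..<d}. \<theta> i \<noteq> 0}" by auto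
      then show "card {i. i < d \<and> \<theta> i \<noteq> 0} \<le> s" using Ks unfolding K_def by simp
    qed
    then show ?thesis unfolding Wr_def worst_risk_def
      by (intro Sup_upper CollectI exI[of _ "meas radp"] exI[of _ \<delta>] exI[of _ \<theta>] conjI refl G1 d0)
  qed
  define S0 where "S0 = (\<Sum>\<theta>\<in>Th. \<Sum>\<epsilon>\<in>E. g0 (yf \<theta> \<epsilon>) * (W \<theta> * (1/2)^d))"
  define S1 where "S1 = (\<lambda>\<theta>. \<Sum>\<epsilon>\<in>E. g1 \<theta> (yf \<theta> \<epsilon>) * (1/2)^d)"
  have L0: "ennreal S0 \<le> Wr"
  proof -
    have "ennreal S0 \<le> (\<integral>\<^sup>+ z. ennreal (g0 z) \<partial>obs_law d (\<lambda>_. 0) 1 (meas (q0 p M \<delta>)))"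
      unfolding S0_def Th_def E_def yf_def W_def by (rule lower0[OF g0nn])
    also have "\<dots> = risk l r d T (\<lambda>_. 0) 1 (meas (q0 p M \<delta>))" unfolding risk_def g0_def ..
    finally show ?thesis using r0 by simp
  qed
  have L1: "ennreal (S1 \<theta>) \<le> Wr" if th: "\<theta> \<in> Good" for \<theta>
  proof -
    have "ennreal (S1 \<theta>) \<le> (\<integral>\<^sup>+ z. ennreal (g1 \<theta> z) \<partial>obs_law d \<theta> \<delta> (meas radp))"
      unfolding S1_def E_def yf_def by (rule lower1) (rule g1nn)
    also have "\<dots> = risk l r d T \<theta> \<delta> (meas radp)" unfolding risk_def g1_def ..
    finally show ?thesis using r1[OF th] by simp
  qed
  have pw: "l x0 \<le> g0 (yf \<theta> \<epsilon>) + g1 \<theta> (yf \<theta> \<epsilon>)" if th: "\<theta> \<in> Good" for \<theta> \<epsilon>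
  proof -
    have thT: "\<theta> \<in> Th" and Ks: "s \<le> 64 * K \<theta>" using th unfolding Good_def by auto
    have nrm: "l2norm d \<theta> = M * sqrt (real (K \<theta>))"
      using l2norm_pattern[of \<theta> d M] thT M0 unfolding Th_def K_def by simp
    have "sqrt (real s) \<le> sqrt (64 * real (K \<theta>))" 
    proof (intro real_sqrt_le_mono)
      have "real s \<le> real (64 * K \<theta>)" using Ks by (simp only: of_nat_le_iff)
      then show "real s \<le> 64 * real (K \<theta>)" by simp
    qed
    also have "\<dots> = 8 * sqrt (real (K \<theta>))" by (simp add: real_sqrt_mult)
    finally have sK: "sqrt (real s) \<le> 8 * sqrt (real (K \<theta>))" .
    have "r * M * sqrt (real s) / 16 \<le> r * (M * sqrt (real (K \<theta>))) / 2"
    proof -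
      have "r * M * sqrt (real s) \<le> r * M * (8 * sqrt (real (K \<theta>)))"
        using sK r M0 by (intro mult_left_mono) auto
      then show ?thesis by (simp add: algebra_simps)
    qed
    then have key2: "x0 \<le> r * l2norm d \<theta> / 2" unfolding nrm using key by linarith
    have z: "l2norm d (\<lambda>_. 0) = 0" unfolding l2norm_def by simp
    have "l x0 \<le> l (r * \<bar>(T (yf \<theta> \<epsilon>) - 0) / 1\<bar>) + l (r * \<bar>(T (yf \<theta> \<epsilon>) - l2norm d \<theta>) / \<delta>\<bar>)"
      by (rule pair_loss[OF l x0 r d0 _ key2]) (use d1 in simp, simp add: l2norm_def sum_nonneg)
    then show ?thesis unfolding g0_def g1_def z .
  qed
  have comb: "l x0 * (\<Sum>\<theta>\<in>Good. W \<theta>) \<le> S0 + (\<Sum>\<theta>\<in>Good. W \<theta> * S1 \<theta>)"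
  proof -
    have "(\<Sum>\<theta>\<in>Good. \<Sum>\<epsilon>\<in>E. g0 (yf \<theta> \<epsilon>) * (W \<theta> * (1/2)^d)) \<le> S0"
      unfolding S0_def
      by (rule sum_mono2[OF finTh GoodTh]) (intro sum_nonneg mult_nonneg_nonneg g0nn Wnn; simp)
    moreover have "l x0 * (\<Sum>\<theta>\<in>Good. W \<theta>) \<le>
        (\<Sum>\<theta>\<in>Good. \<Sum>\<epsilon>\<in>E. g0 (yf \<theta> \<epsilon>) * (W \<theta> * (1/2)^d)) + (\<Sum>\<theta>\<in>Good. W \<theta> * S1 \<theta>)"
    proof -
      have "l x0 * (\<Sum>\<theta>\<in>Good. W \<theta>) = (\<Sum>\<theta>\<in>Good. \<Sum>\<epsilon>\<in>E. W \<theta> * (1/2)^d * l x0)"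
        using cardE by (simp add: sum_distrib_left power_one_over field_simps)
      also have "\<dots> \<le> (\<Sum>\<theta>\<in>Good. \<Sum>\<epsilon>\<in>E. W \<theta> * (1/2)^d * (g0 (yf \<theta> \<epsilon>) + g1 \<theta> (yf \<theta> \<epsilon>)))"
      proof (intro sum_mono)
        fix \<theta> \<epsilon> assume "\<theta> \<in> Good"
        then show "W \<theta> * (1/2)^d * l x0 \<le> W \<theta> * (1/2)^d * (g0 (yf \<theta> \<epsilon>) + g1 \<theta> (yf \<theta> \<epsilon>))"
          using pw Wnn by (intro mult_left_mono) auto
      qed
      also have "\<dots> = (\<Sum>\<theta>\<in>Good. \<Sum>\<epsilon>\<in>E. g0 (yf \<theta> \<epsilon>) * (W \<theta> * (1/2)^d)) + (\<Sum>\<theta>\<in>Good. W \<theta> * S1 \<theta>)"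
        unfolding S1_def by (simp add: sum.distrib sum_distrib_left algebra_simps)
      finally show ?thesis .
    qed
    ultimately show ?thesis by linarith
  qed
  show ?thesis
  proof (cases Wr)
    case (real w)
    have w0: "w \<ge> 0" using real by simp
    have S0w: "S0 \<le> w" using L0 real w0 by simp
    have S1w: "S1 \<theta> \<le> w" if "\<theta> \<in> Good" for \<theta> using L1[OF that] real w0 by simp
    have "(\<Sum>\<theta>\<in>Good. W \<theta> * S1 \<theta>) \<le> (\<Sum>\<theta>\<in>Good. W \<theta> * w)"
      by (intro sum_mono mult_left_mono S1w Wnn)
    also have "\<dots> = w * (\<Sum>\<theta>\<in>Good. W \<theta>)" by (simp add: sum_distrib_left mult.commute)
    also have "\<dots> \<le> w" using PG1 w0 by (simp add: mult_left_le)
    finally have "l x0 * (\<Sum>\<theta>\<in>Good. W \<theta>) \<le> 2 * w" using comb S0w by linarith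
    moreover have "l x0 * (3/40) \<le> l x0 * (\<Sum>\<theta>\<in>Good. W \<theta>)"
      using PGood loss_nonneg[OF l x0] by (intro mult_left_mono) auto
    ultimately have "l x0 * 3 / 80 \<le> w" by linarith
    then show ?thesis using real unfolding Wr_def by simp
  next
    case top
    then show ?thesis unfolding Wr_def by simp
  qed
qed

end

lemma final_step:
  fixes l :: "real \<Rightarrow> real" and R :: "nat \<Rightarrow> nat \<Rightarrow> real" and bnd :: "real \<Rightarrow> real" and A :: real
  assumes l: "l \<in> loss_class"
    and A0: "0 < A" and A1: "A \<le> 1"
    and R1: "\<And>s d. 1 \<le> s \<Longrightarrow> s \<le> d \<Longrightarrow> R s d \<ge> 1"
    and hvar: "\<And>s d. 1 \<le> s \<Longrightarrow> s \<le> d \<Longrightarrow> real s / (4 * real d) * (A * R s d)^2 \<le> 1/4"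
    and bnn: "\<And>t. 2 \<le> t \<Longrightarrow> 0 \<le> bnd t"
    and htail: "\<And>s d t. 1 \<le> s \<Longrightarrow> s \<le> d \<Longrightarrow> 2 \<le> t \<Longrightarrow> t \<le> 2 * (A * R s d) \<Longrightarrow> real s / (4 * real d) \<le> bnd t"
  shows "\<exists>c>0. \<exists>c'>0. \<forall>s d::nat. 1 \<le> s \<and> s \<le> d \<longrightarrow>
            (INF T\<in>estimators d. worst_risk l (c / (sqrt (real s) * R s d)) d s
               {P \<in> std_noise. \<forall>t\<ge>2. measure P {x. \<bar>x\<bar> > t} \<le> bnd t} T) \<ge> ennreal c'"
proof -
  let ?G = "{P \<in> std_noise. \<forall>t\<ge>2. measure P {x. \<bar>x\<bar> > t} \<le> bnd t}"
  obtain x0 where x00: "0 \<le> x0" and lx0: "l x0 \<noteq> 0" using l unfolding loss_class_def by blast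
  have lpos: "l x0 > 0" using loss_nonneg[OF l x00] lx0 by simp
  have x0pos: "x0 > 0" using lx0 x00 l unfolding loss_class_def by (cases "x0 = 0") auto
  define \<kappa> where "\<kappa> = min A (1/2) * A / 2"
  have \<kappa>0: "\<kappa> > 0" unfolding \<kappa>_def using A0 by simp
  define c where "c = 16 * x0 / \<kappa>"
  have c0: "c > 0" unfolding c_def using x0pos \<kappa>0 by simp
  have "ennreal (l x0 * 3 / 80) \<le> (INF T\<in>estimators d. worst_risk l (c / (sqrt (real s) * R s d)) d s ?G T)"
    if s1: "1 \<le> s" and sd: "s \<le> d" for s d
  proof (rule INF_greatest)
    fix T assume "T \<in> estimators d"
    define Rs where "Rs = R s d"
    have Rs1: "Rs \<ge> 1" unfolding Rs_def by (rule R1[OF s1 sd])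
    define p where "p = real s / (4 * real d)"
    define M where "M = (if A * Rs \<ge> 2 then A * Rs else min (A * Rs) (1/2))"
    define \<delta> where "\<delta> = sqrt (1 - p * M^2)"
    have d0: "real d > 0" using s1 sd by simp
    have p0: "0 < p" and p1: "p \<le> 1" unfolding p_def using s1 sd d0 by (auto simp: field_simps)
    have M0: "0 < M" unfolding M_def using A0 Rs1 by auto
    have MAR: "M \<le> A * Rs" unfolding M_def by auto
    have Mk: "M \<ge> \<kappa> * Rs"
    proof (cases "A * Rs \<ge> 2")
      case True
      have "\<kappa> \<le> A" unfolding \<kappa>_def using A0 A1 by (simp add: min_def)
      then show ?thesis unfolding M_def using True Rs1 by (simp add: mult_right_mono)
    next
      case False
      then have "Rs < 2 / A" using A0 by (simp add: field_simps)
      then have "\<kappa> * Rs \<le> \<kappa> * (2 / A)" using \<kappa>0 by (intro mult_left_mono) auto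
      also have "\<dots> = min A (1/2)" unfolding \<kappa>_def using A0 by simp
      also have "\<dots> \<le> min (A * Rs) (1/2)"
      proof -
        have "A \<le> A * Rs" using A0 Rs1 by simp
        then show ?thesis by (auto simp: min_def)
      qed
      finally show ?thesis unfolding M_def using False by simp
    qed
    have pM: "p * M^2 \<le> 1/4"
    proof -
      have "M^2 \<le> (A * Rs)^2" using M0 MAR by (intro power_mono) auto
      then have "p * M^2 \<le> p * (A * Rs)^2" using p0 by (intro mult_left_mono) auto
      also have "\<dots> \<le> 1/4" unfolding p_def Rs_def by (rule hvar[OF s1 sd])
      finally show ?thesis .
    qed
    have pMpos: "p * M^2 > 0" using p0 M0 by simp
    have dd: "\<delta>^2 = 1 - p * M^2" unfolding \<delta>_def using pM by simp
    have dpos: "0 < \<delta>" unfolding \<delta>_def using pM by simp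
    have dlt1: "\<delta> < 1" unfolding \<delta>_def using pMpos pM by simp
    have dge: "\<delta> > 1/2"
    proof -
      have "(1/2)^2 < \<delta>^2" using dd pM by (simp add: power2_eq_square)
      then show ?thesis using dpos by (smt (verit) power_mono)
    qed
    have Mcase: "M \<le> 1/2 \<or> (M \<ge> 2 \<and> M = A * Rs)" unfolding M_def by auto
    interpret np: noise_par p M \<delta>
    proof
      show "0 < p" "p \<le> 1" "0 < M" "0 < \<delta>" "\<delta> < 1" by (fact p0 p1 M0 dpos dlt1)+
      show "M \<noteq> \<delta>" using Mcase dge dlt1 by auto
      show "M \<noteq> 2 * \<delta>" using Mcase dge dlt1 by auto
      show "p * M^2 + \<delta>^2 = 1" using dd by simp
    qed
    have G0: "meas (q0 p M \<delta>) \<in> ?G"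
    proof (intro CollectI conjI allI impI)
      show "meas (q0 p M \<delta>) \<in> std_noise" by (rule np.q0_std)
      fix t :: real assume t2: "2 \<le> t"
      have "measure (meas (q0 p M \<delta>)) {x. \<bar>x\<bar> > t} \<le> (if t < M + \<delta> then p else 0)" by (rule np.q0_tail[OF t2])
      also have "\<dots> \<le> bnd t"
      proof (cases "t < M + \<delta>")
        case True
        then have "M \<ge> 2 \<and> M = A * Rs" using Mcase t2 dlt1 by auto
        then have "t \<le> 2 * (A * Rs)" using True dlt1 by auto
        then have "p \<le> bnd t" unfolding p_def Rs_def by (rule htail[OF s1 sd t2])
        then show ?thesis using True by simp
      next
        case False then show ?thesis using bnn[OF t2] by simp
      qed
      finally show "measure (meas (q0 p M \<delta>)) {x. \<bar>x\<bar> > t} \<le> bnd t" .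
    qed
    have G1: "meas radp \<in> ?G"
    proof (intro CollectI conjI allI impI)
      show "meas radp \<in> std_noise" by (rule radp_std)
      fix t :: real assume t2: "2 \<le> t"
      show "measure (meas radp) {x. \<bar>x\<bar> > t} \<le> bnd t" using radp_tail[OF t2] bnn[OF t2] by simp
    qed
    define r where "r = c / (sqrt (real s) * Rs)"
    have sq: "sqrt (real s) > 0" using s1 by simp
    have r0: "r > 0" unfolding r_def using c0 sq Rs1 by simp
    have key: "x0 \<le> r * M * sqrt (real s) / 16"
    proof -
      have "r * M * sqrt (real s) / 16 = c * M / (16 * Rs)" unfolding r_def using sq Rs1 by (simp add: field_simps)
      also have "c * M / (16 * Rs) \<ge> c * (\<kappa> * Rs) / (16 * Rs)"
        using Mk c0 Rs1 by (intro divide_right_mono mult_left_mono) auto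
      also have "c * (\<kappa> * Rs) / (16 * Rs) = x0" unfolding c_def using \<kappa>0 Rs1 by (simp add: field_simps)
      finally show ?thesis by simp
    qed
    have "ennreal (l x0 * 3 / 80) \<le> worst_risk l r d s ?G T"
      by (rule np.core[OF s1 sd p_def G0 G1 l x00 r0 key])
    then show "ennreal (l x0 * 3 / 80) \<le> worst_risk l (c / (sqrt (real s) * R s d)) d s ?G T"
      unfolding r_def Rs_def .
  qed
  note H = this
  have pos: "l x0 * 3 / 80 > 0" using lpos by simp
  show ?thesis
    apply (rule exI[of _ c], rule conjI[OF c0], rule exI[of _ "l x0 * 3 / 80"], rule conjI[OF pos])
    using H by blast
qed

lemma poly_case:
  fixes a \<tau> :: real and l
  assumes a2: "a \<ge> 2" and tau: "\<tau> > 0" and l: "l \<in> loss_class"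
  shows "\<exists>c>0. \<exists>c'>0. \<forall>s d::nat. 1 \<le> s \<and> s \<le> d \<longrightarrow>
            (INF T\<in>estimators d.
               worst_risk l (c / (sqrt (real s) * (real d / real s) powr (1 / a)))
                 d s (poly_class a \<tau>) T) \<ge> ennreal c'"
proof -
  define A where "A = min 1 (\<tau> / 2)"
  have A0: "0 < A" and A1: "A \<le> 1" and A2: "A \<le> \<tau> / 2" unfolding A_def using tau by auto
  have a0: "a > 0" using a2 by simp
  have "\<exists>c>0. \<exists>c'>0. \<forall>s d::nat. 1 \<le> s \<and> s \<le> d \<longrightarrow>
            (INF T\<in>estimators d. worst_risk l (c / (sqrt (real s) * (\<lambda>s d. (real d / real s) powr (1 / a)) s d)) d s
               {P \<in> std_noise. \<forall>t\<ge>2. measure P {x. \<bar>x\<bar> > t} \<le> (\<lambda>t. (\<tau> / t) powr a) t} T) \<ge> ennreal c'"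
  proof (rule final_step[OF l A0 A1])
    fix s d :: nat assume s1: "1 \<le> s" and sd: "s \<le> d"
    have x1: "real d / real s \<ge> 1" using s1 sd by simp
    have s0: "real s > 0" using s1 by simp
    show R1: "(real d / real s) powr (1 / a) \<ge> 1" using x1 a0 by (intro ge_one_powr_ge_zero) auto
    have Rsq: "((real d / real s) powr (1 / a))^2 = (real d / real s) powr (2 / a)"
      by (simp add: power2_eq_square powr_add[symmetric])
    have "(real d / real s) powr (2 / a) \<le> (real d / real s) powr 1"
      using x1 a2 by (intro powr_mono) (auto simp: field_simps)
    then have R2: "((real d / real s) powr (1 / a))^2 \<le> real d / real s" using x1 Rsq by simp
    have "(A * (real d / real s) powr (1 / a))^2 \<le> ((real d / real s) powr (1 / a))^2"
    proof -
      have "A^2 \<le> 1" using A0 A1 by (simp add: power_le_one)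
      then show ?thesis by (simp add: power_mult_distrib mult_left_le_one_le)
    qed
    also have "\<dots> \<le> real d / real s" by (rule R2)
    finally have "real s / (4 * real d) * (A * (real d / real s) powr (1 / a))^2 \<le> real s / (4 * real d) * (real d / real s)"
      using s0 by (intro mult_left_mono) auto
    also have "\<dots> = 1/4" using s0 sd s1 by (simp add: field_simps)
    finally show "real s / (4 * real d) * (A * (real d / real s) powr (1 / a))^2 \<le> 1/4" .
  next
    fix t :: real assume "2 \<le> t" then show "0 \<le> (\<tau> / t) powr a" by simp
  next
    fix s d :: nat and t :: real
    assume s1: "1 \<le> s" and sd: "s \<le> d" and t2: "2 \<le> t" and tR: "t \<le> 2 * (A * (real d / real s) powr (1 / a))"
    define R where "R = (real d / real s) powr (1 / a)"
    have x1: "real d / real s \<ge> 1" using s1 sd by simp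
    have s0: "real s > 0" using s1 by simp
    have R1: "R \<ge> 1" unfolding R_def using x1 a0 by (intro ge_one_powr_ge_zero) auto
    have Ra: "R powr a = real d / real s" unfolding R_def using a0 x1 by (simp add: powr_powr)
    have "(\<tau> / (2 * A * R)) powr a \<le> (\<tau> / t) powr a"
      using tR tau t2 A0 R1 a0 unfolding R_def by (intro powr_mono2) (auto simp: field_simps)
    moreover have "(\<tau> / (2 * A * R)) powr a = (\<tau> / (2 * A)) powr a / R powr a"
      using tau A0 R1 by (simp add: powr_divide[symmetric] mult.assoc)
    moreover have "(\<tau> / (2 * A)) powr a \<ge> 1"
      using A0 A2 tau a0 by (intro ge_one_powr_ge_zero) (auto simp: field_simps)
    ultimately have "1 / (real d / real s) \<le> (\<tau> / t) powr a" unfolding Ra using x1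
      by (smt (verit) divide_right_mono)
    moreover have "real s / (4 * real d) \<le> 1 / (real d / real s)" using s0 x1 by (simp add: field_simps)
    ultimately show "real s / (4 * real d) \<le> (\<tau> / t) powr a" by linarith
  qed
  then show ?thesis unfolding poly_class_def by simp
qed

lemma ln_powr_bound:
  fixes a x :: real
  assumes a0: "a > 0" and x1: "x \<ge> 1"
  shows "(1 + ln x) powr (2 / a) \<le> (1 + 2 / a) powr (2 / a) * x"
proof -
  define y where "y = x powr (a / 2)"
  have y1: "y \<ge> 1" unfolding y_def using x1 a0 by (intro ge_one_powr_ge_zero) auto
  have "ln y \<le> y - 1" using y1 by (intro ln_le_minus_one) auto
  moreover have "ln y = (a / 2) * ln x" unfolding y_def using x1 by (simp add: ln_powr)
  ultimately have "(a / 2) * ln x \<le> y - 1" by simp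
  then have lnx: "ln x \<le> (2 / a) * (y - 1)" using a0 by (simp add: field_simps)
  have ay: "a \<le> a * y" using y1 a0 by simp
  have h: "a * ln x \<le> 2 * y - 2" using lnx a0 by (simp add: field_simps)
  have h2: "a + a * ln x \<le> a * y + y * 2" using h ay by linarith
  have e1: "(1 + 2 / a) * y = (a * y + y * 2) / a" using a0 by (simp add: field_simps)
  have e2: "1 + ln x = (a + a * ln x) / a" using a0 by (simp add: field_simps)
  have "1 + ln x \<le> (1 + 2 / a) * y" unfolding e1 e2 using h2 a0 by (auto intro!: divide_right_mono)
  moreover have "0 \<le> 1 + ln x" using x1 by simp
  ultimately have "(1 + ln x) powr (2 / a) \<le> ((1 + 2 / a) * y) powr (2 / a)"
    using a0 by (intro powr_mono2) auto
  also have "\<dots> = (1 + 2 / a) powr (2 / a) * y powr (2 / a)"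
    using a0 y1 by (intro powr_mult)
  also have "y powr (2 / a) = x" unfolding y_def using a0 x1 by (simp add: powr_powr)
  finally show ?thesis .
qed

lemma subexp_case:
  fixes a \<tau> :: real and l
  assumes a0: "a > 0" and tau: "\<tau> > 0" and l: "l \<in> loss_class"
  shows "\<exists>c>0. \<exists>c'>0. \<forall>s d::nat. 1 \<le> s \<and> s \<le> d \<longrightarrow>
            (INF T\<in>estimators d.
               worst_risk l (c / (sqrt (real s) * ln (exp 1 * real d / real s) powr (1 / a)))
                 d s (subexp_class a \<tau>) T) \<ge> ennreal c'"
proof -
  define C where "C = (1 + 2 / a) powr (2 / a)"
  have C1: "C \<ge> 1" unfolding C_def using a0 by (intro ge_one_powr_ge_zero) auto
  define A where "A = min 1 (min (\<tau> / 2) (1 / sqrt C))"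
  have A0: "0 < A" and A1: "A \<le> 1" and A2: "A \<le> \<tau> / 2" and A3: "A \<le> 1 / sqrt C"
    unfolding A_def using tau C1 by auto
  have AC: "A^2 * C \<le> 1"
  proof -
    have "A^2 \<le> (1 / sqrt C)^2" using A0 A3 by (intro power_mono) auto
    also have "\<dots> = 1 / C" using C1 by (simp add: power_divide)
    finally show ?thesis using C1 by (simp add: field_simps)
  qed
  have Leq: "ln (exp 1 * real d / real s) = 1 + ln (real d / real s)" if "1 \<le> s" "s \<le> d" for s d :: nat
  proof -
    have e: "exp 1 * real d / real s = exp 1 * (real d / real s)" by simp
    have "real d / real s > 0" using that by simp
    then have "ln (exp 1 * (real d / real s)) = ln (exp 1) + ln (real d / real s)" by (intro ln_mult_pos) auto
    then show ?thesis unfolding e by simp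
  qed
  have "\<exists>c>0. \<exists>c'>0. \<forall>s d::nat. 1 \<le> s \<and> s \<le> d \<longrightarrow>
            (INF T\<in>estimators d. worst_risk l (c / (sqrt (real s) * (\<lambda>s d. ln (exp 1 * real d / real s) powr (1 / a)) s d)) d s
               {P \<in> std_noise. \<forall>t\<ge>2. measure P {x. \<bar>x\<bar> > t} \<le> (\<lambda>t. 2 * exp (- ((t / \<tau>) powr a))) t} T) \<ge> ennreal c'"
  proof (rule final_step[OF l A0 A1])
    fix s d :: nat assume s1: "1 \<le> s" and sd: "s \<le> d"
    have x1: "real d / real s \<ge> 1" using s1 sd by simp
    have s0: "real s > 0" using s1 by simp
    have L1: "ln (exp 1 * real d / real s) \<ge> 1" unfolding Leq[OF s1 sd] using x1 by simp
    show "ln (exp 1 * real d / real s) powr (1 / a) \<ge> 1" using L1 a0 by (intro ge_one_powr_ge_zero) auto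
    have Rsq: "(ln (exp 1 * real d / real s) powr (1 / a))^2 = ln (exp 1 * real d / real s) powr (2 / a)"
      by (simp add: power2_eq_square powr_add[symmetric])
    have "(A * ln (exp 1 * real d / real s) powr (1 / a))^2 = A^2 * (1 + ln (real d / real s)) powr (2 / a)"
    proof -
      have sqp: "(z powr (1 / a))^2 = z powr (2 / a)" for z :: real
        by (simp add: power2_eq_square powr_add[symmetric])
      show ?thesis unfolding power_mult_distrib Leq[OF s1 sd] sqp ..
    qed
    also have "\<dots> \<le> A^2 * (C * (real d / real s))"
      unfolding C_def by (intro mult_left_mono ln_powr_bound[OF a0 x1]) auto
    also have "\<dots> \<le> real d / real s"
    proof -
      have "A^2 * (C * (real d / real s)) = (A^2 * C) * (real d / real s)" by (simp only: mult.assoc)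
      also have "\<dots> \<le> real d / real s" using AC x1 A0 C1 by (intro mult_left_le_one_le) auto
      finally show ?thesis .
    qed
    finally have "real s / (4 * real d) * (A * ln (exp 1 * real d / real s) powr (1 / a))^2 \<le> real s / (4 * real d) * (real d / real s)"
      using s0 by (intro mult_left_mono) auto
    also have "\<dots> = 1/4" using s0 sd s1 by (simp add: field_simps)
    finally show "real s / (4 * real d) * (A * ln (exp 1 * real d / real s) powr (1 / a))^2 \<le> 1/4" .
  next
    fix t :: real assume "2 \<le> t" then show "0 \<le> 2 * exp (- ((t / \<tau>) powr a))" by simp
  next
    fix s d :: nat and t :: real
    assume s1: "1 \<le> s" and sd: "s \<le> d" and t2: "2 \<le> t" and tR: "t \<le> 2 * (A * ln (exp 1 * real d / real s) powr (1 / a))"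
    define Lg where "Lg = ln (exp 1 * real d / real s)"
    have x1: "real d / real s \<ge> 1" using s1 sd by simp
    have s0: "real s > 0" using s1 by simp
    have L1: "Lg \<ge> 1" unfolding Lg_def Leq[OF s1 sd] using x1 by simp
    have "(t / \<tau>) powr a \<le> (2 * A * Lg powr (1 / a) / \<tau>) powr a"
      using tR tau t2 a0 unfolding Lg_def by (intro powr_mono2) (auto simp: field_simps)
    also have "\<dots> = (2 * A / \<tau>) powr a * (Lg powr (1 / a)) powr a"
      using A0 tau L1 by (simp add: powr_mult[symmetric])
    also have "(Lg powr (1 / a)) powr a = Lg" using a0 L1 by (simp add: powr_powr)
    also have "(2 * A / \<tau>) powr a \<le> 1"
    proof -
      have "(2 * A / \<tau>) powr a \<le> 1 powr a" using A0 A2 tau a0 by (intro powr_mono2) (auto simp: field_simps)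
      then show ?thesis by simp
    qed
    then have "(2 * A / \<tau>) powr a * Lg \<le> Lg" using L1 by (simp add: mult_left_le_one_le)
    finally have tb: "(t / \<tau>) powr a \<le> Lg" .
    have "exp (- Lg) \<le> exp (- ((t / \<tau>) powr a))" using tb by simp
    moreover have "exp (- Lg) = real s / (exp 1 * real d)"
      unfolding Lg_def using s0 x1 by (simp add: exp_minus field_simps)
    moreover have "real s / (4 * real d) \<le> 2 * (real s / (exp 1 * real d))"
    proof -
      have "exp 1 \<le> (8::real)" using exp_le by simp
      then show ?thesis using s0 x1 by (simp add: field_simps)
    qed
    ultimately show "real s / (4 * real d) \<le> 2 * exp (- ((t / \<tau>) powr a))" by linarith
  qed
  then show ?thesis unfolding subexp_class_def by simp
qed

theorem theorem2:
  shows "(\<forall>a>0. \<forall>\<tau>>0. \<forall>l\<in>loss_class. \<exists>c>0. \<exists>c'>0. \<forall>s d::nat. 1 \<le> s \<and> s \<le> d \<longrightarrow>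
            (INF T\<in>estimators d.
               worst_risk l (c / (sqrt (real s) * ln (exp 1 * real d / real s) powr (1 / a)))
                 d s (subexp_class a \<tau>) T) \<ge> ennreal c')
       \<and> (\<forall>a\<ge>2. \<forall>\<tau>>0. \<forall>l\<in>loss_class. \<exists>c>0. \<exists>c'>0. \<forall>s d::nat. 1 \<le> s \<and> s \<le> d \<longrightarrow>
            (INF T\<in>estimators d.
               worst_risk l (c / (sqrt (real s) * (real d / real s) powr (1 / a)))
                 d s (poly_class a \<tau>) T) \<ge> ennreal c')"
proof (intro conjI allI impI ballI)
  fix a \<tau> :: real and l :: "real \<Rightarrow> real"
  assume "0 < a" "0 < \<tau>" "l \<in> loss_class"
  then show "\<exists>c>0. \<exists>c'>0. \<forall>s d::nat. 1 \<le> s \<and> s \<le> d \<longrightarrow>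
            (INF T\<in>estimators d.
               worst_risk l (c / (sqrt (real s) * ln (exp 1 * real d / real s) powr (1 / a)))
                 d s (subexp_class a \<tau>) T) \<ge> ennreal c'" by (rule subexp_case)
next
  fix a \<tau> :: real and l :: "real \<Rightarrow> real"
  assume "2 \<le> a" "0 < \<tau>" "l \<in> loss_class"
  then show "\<exists>c>0. \<exists>c'>0. \<forall>s d::nat. 1 \<le> s \<and> s \<le> d \<longrightarrow>
            (INF T\<in>estimators d.
               worst_risk l (c / (sqrt (real s) * (real d / real s) powr (1 / a)))
                 d s (poly_class a \<tau>) T) \<ge> ennreal c'" by (rule poly_case)
qed

end
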